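(* Let $H$ be a complex infinite-dimensional separable Hilbert space and let $(f_n)_{n=1}^\infty$ and $(g_n)_{n=1}^\infty$ be frames for $H$ with analysis operators $U$ and $V$. If $I-VU^*$ is a compact operator on $\ell^2$, then both $(f_n)_{n=1}^\infty$ and $(g_n)_{n=1}^\infty$ are near-Riesz bases.
   Context: The analysis operator of a frame $(f_n)$ is $U:H\to\ell^2$, $Ux=(\langle x,f_n\rangle)_n$. The excess of a frame is the maximal number of elements that can be deleted so that the remaining sequence is still a frame; it equals $\dim\operatorname{Ker}U^*$. A near-Riesz basis is a frame with finite excess. *)

theory Defs
  imports "HOL-Analysis.Analysis"
begin

text \<open>The inner product is linear in the first argument and
  conjugate-linear in the second (as in the frame literature).\<close>

class complex_vector = ab_group_add +
  fixes scaleC :: "complex \<Rightarrow> 'a \<Rightarrow> 'a" (infixr "*\<^sub>C" 75)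
  assumes scaleC_add_right: "a *\<^sub>C (x + y) = a *\<^sub>C x + a *\<^sub>C y"
    and scaleC_add_left: "(a + b) *\<^sub>C x = a *\<^sub>C x + b *\<^sub>C x"
    and scaleC_scaleC: "a *\<^sub>C (b *\<^sub>C x) = (a * b) *\<^sub>C x"
    and scaleC_one: "1 *\<^sub>C x = x"

class complex_inner = complex_vector +
  fixes cinner :: "'a \<Rightarrow> 'a \<Rightarrow> complex"
  assumes cinner_add_left: "cinner (x + y) z = cinner x z + cinner y z"
    and cinner_scaleC_left: "cinner (a *\<^sub>C x) y = a * cinner x y"
    and cinner_commute: "cinner y x = cnj (cinner x y)"
    and cinner_ge_zero: "0 \<le> Re (cinner x x)"
    and cinner_eq_zero_iff: "cinner x x = 0 \<longleftrightarrow> x = 0"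

definition hnorm :: "'a::complex_inner \<Rightarrow> real" where
  "hnorm x = sqrt (Re (cinner x x))"

class complex_hilbert = complex_inner +
  assumes hilbert_complete:
    "(\<forall>e>0. \<exists>N. \<forall>m\<ge>N. \<forall>n\<ge>N. sqrt (Re (cinner (X m - X n) (X m - X n))) < e) \<Longrightarrow>
       \<exists>L. (\<lambda>n. sqrt (Re (cinner (X n - L) (X n - L)))) \<longlonglongrightarrow> 0"

definition separable_hilbert :: "'a::complex_hilbert itself \<Rightarrow> bool" where
  "separable_hilbert _ \<longleftrightarrow>
     (\<exists>D::'a set. countable D \<and> (\<forall>x e. e > 0 \<longrightarrow> (\<exists>d\<in>D. hnorm (x - d) < e)))"

definition cspan :: "'a::complex_vector set \<Rightarrow> 'a set" where
  "cspan S = {x. \<exists>T c. finite T \<and> T \<subseteq> S \<and> x = (\<Sum>s\<in>T. c s *\<^sub>C s)}"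

definition infinite_dimensional :: "'a::complex_vector itself \<Rightarrow> bool" where
  "infinite_dimensional _ \<longleftrightarrow> (\<forall>S::'a set. finite S \<longrightarrow> cspan S \<noteq> UNIV)"

definition l2 :: "(nat \<Rightarrow> complex) set" where
  "l2 = {c. summable (\<lambda>n. (cmod (c n))\<^sup>2)}"

definition l2norm :: "(nat \<Rightarrow> complex) \<Rightarrow> real" where
  "l2norm c = sqrt (\<Sum>n. (cmod (c n))\<^sup>2)"

definition l2inner :: "(nat \<Rightarrow> complex) \<Rightarrow> (nat \<Rightarrow> complex) \<Rightarrow> complex" where
  "l2inner c d = (\<Sum>n. c n * cnj (d n))"

definition l2_compact :: "((nat \<Rightarrow> complex) \<Rightarrow> (nat \<Rightarrow> complex)) \<Rightarrow> bool" where
  "l2_compact T \<longleftrightarrow> (\<forall>c\<in>l2. T c \<in> l2) \<and>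
     (\<forall>X. (\<forall>n. X n \<in> l2) \<and> (\<exists>M. \<forall>n. l2norm (X n) \<le> M) \<longrightarrow>
        (\<exists>(r::nat \<Rightarrow> nat) L. strict_mono r \<and> L \<in> l2 \<and> (\<lambda>k. l2norm (T (X (r k)) - L)) \<longlonglongrightarrow> 0))"

text \<open>A frame indexed by the subset \<open>I\<close> of \<open>\<nat>\<close> (used to express deletion of elements).\<close>
definition frame_on :: "nat set \<Rightarrow> (nat \<Rightarrow> 'a::complex_hilbert) \<Rightarrow> bool" where
  "frame_on I f \<longleftrightarrow> (\<exists>A B. 0 < A \<and> A \<le> B \<and>
     (\<forall>x. summable (\<lambda>n. if n \<in> I then (cmod (cinner x (f n)))\<^sup>2 else 0) \<and>
          A * (hnorm x)\<^sup>2 \<le> (\<Sum>n. if n \<in> I then (cmod (cinner x (f n)))\<^sup>2 else 0) \<and>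
          (\<Sum>n. if n \<in> I then (cmod (cinner x (f n)))\<^sup>2 else 0) \<le> B * (hnorm x)\<^sup>2))"

definition frame :: "(nat \<Rightarrow> 'a::complex_hilbert) \<Rightarrow> bool" where
  "frame f \<longleftrightarrow> frame_on UNIV f"

definition analysis_op :: "(nat \<Rightarrow> 'a::complex_hilbert) \<Rightarrow> 'a \<Rightarrow> (nat \<Rightarrow> complex)" where
  "analysis_op f x = (\<lambda>n. cinner x (f n))"

definition analysis_adj :: "(nat \<Rightarrow> 'a::complex_hilbert) \<Rightarrow> (nat \<Rightarrow> complex) \<Rightarrow> 'a" where
  "analysis_adj f c = (THE y. \<forall>x. cinner x y = l2inner (analysis_op f x) c)"

text \<open>Excess: maximal number of elements that can be deleted so that the rest is still
  a frame. A near-Riesz basis is a frame with finite excess, i.e. the cardinalities of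
  deletable index sets are finite and bounded.\<close>
definition near_riesz :: "(nat \<Rightarrow> 'a::complex_hilbert) \<Rightarrow> bool" where
  "near_riesz f \<longleftrightarrow> frame f \<and>
     (\<exists>N::nat. \<forall>S. frame_on (UNIV - S) f \<longrightarrow> finite S \<and> card S \<le> N)"

end

theory Submission
  imports Defs
begin


definition sq :: "(nat \<Rightarrow> complex) \<Rightarrow> real" where
  "sq c = (\<Sum>n. (cmod (c n))\<^sup>2)"

lemma l2_iff: "c \<in> l2 \<longleftrightarrow> summable (\<lambda>n. (cmod (c n))\<^sup>2)"
  by (simp add: l2_def)

lemma sq_nonneg: "c \<in> l2 \<Longrightarrow> 0 \<le> sq c"
  unfolding sq_def l2_iff by (intro suminf_nonneg) auto

lemma l2norm_sq: "l2norm c = sqrt (sq c)"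
  by (simp add: l2norm_def sq_def)

lemma cmod_diff_sq: "(cmod (a - b))\<^sup>2 \<le> 2 * (cmod a)\<^sup>2 + 2 * (cmod b)\<^sup>2"
proof -
  have "cmod (a - b) \<le> cmod a + cmod b" by (rule norm_triangle_ineq4)
  hence "(cmod (a - b))\<^sup>2 \<le> (cmod a + cmod b)\<^sup>2" by (simp add: power_mono)
  also have "\<dots> \<le> 2 * (cmod a)\<^sup>2 + 2 * (cmod b)\<^sup>2"
    using zero_le_power2[of "cmod a - cmod b"] unfolding power2_sum power2_diff by linarith
  finally show ?thesis .
qed

lemma cmod_add_sq: "(cmod (a + b))\<^sup>2 \<le> 2 * (cmod a)\<^sup>2 + 2 * (cmod b)\<^sup>2"
  using cmod_diff_sq[of a "-b"] by simp

lemma l2_diff: "a \<in> l2 \<Longrightarrow> b \<in> l2 \<Longrightarrow> (\<lambda>n. a n - b n) \<in> l2"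
  unfolding l2_iff
  by (rule summable_comparison_test[where g="\<lambda>n. 2 * (cmod (a n))\<^sup>2 + 2 * (cmod (b n))\<^sup>2"])
     (auto intro: summable_add summable_mult cmod_diff_sq)

lemma l2_add: "a \<in> l2 \<Longrightarrow> b \<in> l2 \<Longrightarrow> (\<lambda>n. a n + b n) \<in> l2"
  unfolding l2_iff
  by (rule summable_comparison_test[where g="\<lambda>n. 2 * (cmod (a n))\<^sup>2 + 2 * (cmod (b n))\<^sup>2"])
     (auto intro: summable_add summable_mult cmod_add_sq)

lemma l2_minus: "a \<in> l2 \<Longrightarrow> b \<in> l2 \<Longrightarrow> a - b \<in> l2"
  using l2_diff[of a b] by (simp add: fun_diff_def)

lemma l2_scale: "a \<in> l2 \<Longrightarrow> (\<lambda>n. k * a n) \<in> l2"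
  unfolding l2_iff by (simp add: norm_mult power_mult_distrib summable_mult)

lemma l2_restrict: "a \<in> l2 \<Longrightarrow> (\<lambda>n. if P n then a n else 0) \<in> l2"
  unfolding l2_iff
  by (rule summable_comparison_test[where g="\<lambda>n. (cmod (a n))\<^sup>2"]) auto

lemma l2_single: "(\<lambda>n. if n = s then (1::complex) else 0) \<in> l2"
proof -
  have "(\<lambda>n. if n = s then 1 else 0) sums (1::real)" using sums_single[of s "\<lambda>_. 1::real"] by simp
  hence "summable (\<lambda>n. if n = s then 1 else (0::real))" by (rule sums_summable)
  moreover have "(\<lambda>n. (cmod (if n = s then (1::complex) else 0))\<^sup>2) = (\<lambda>n. if n = s then 1 else (0::real))"
    by (auto simp: fun_eq_iff)
  ultimately show ?thesis unfolding l2_iff by simp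
qed

lemma l2_zero: "(\<lambda>n. 0) \<in> l2" unfolding l2_iff by simp

lemma l2_sum: "finite E \<Longrightarrow> E \<subseteq> l2 \<Longrightarrow> (\<lambda>n. \<Sum>e\<in>E. \<alpha> e * e n) \<in> l2"
proof (induction E rule: finite_induct)
  case empty thus ?case by (simp add: l2_zero)
next
  case (insert x F) thus ?case using l2_add[OF l2_scale[of x "\<alpha> x"], of "\<lambda>n. \<Sum>e\<in>F. \<alpha> e * e n"] by simp
qed

lemma prod_le_amgm: "cmod a * cmod b \<le> ((cmod a)\<^sup>2 + (cmod b)\<^sup>2) / 2"
  using sum_squares_ge_zero[of "cmod a - cmod b" 0] by (simp add: power2_eq_square algebra_simps)

lemma summable_prod: "a \<in> l2 \<Longrightarrow> b \<in> l2 \<Longrightarrow> summable (\<lambda>n. cmod (a n) * cmod (b n))"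
  unfolding l2_iff
  apply (rule summable_comparison_test[where g="\<lambda>n. ((cmod (a n))\<^sup>2 + (cmod (b n))\<^sup>2) / 2"])
   apply (rule exI[of _ 0])
  using prod_le_amgm apply (simp add: abs_mult)
  by (intro summable_divide summable_add) auto

lemma summable_inner: "a \<in> l2 \<Longrightarrow> b \<in> l2 \<Longrightarrow> summable (\<lambda>n. a n * cnj (b n))"
  by (rule summable_norm_cancel) (simp add: norm_mult summable_prod)

lemma norm_l2inner: "a \<in> l2 \<Longrightarrow> b \<in> l2 \<Longrightarrow> cmod (l2inner a b) \<le> (\<Sum>n. cmod (a n) * cmod (b n))"
  unfolding l2inner_def by (rule norm_suminf_le) (auto simp: norm_mult summable_prod)

lemma amgm_sum: "a \<in> l2 \<Longrightarrow> b \<in> l2 \<Longrightarrow> (\<Sum>n. cmod (a n) * cmod (b n)) \<le> (sq a + sq b) / 2"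
proof -
  assume a: "a \<in> l2" and b: "b \<in> l2"
  have "(\<Sum>n. cmod (a n) * cmod (b n)) \<le> (\<Sum>n. ((cmod (a n))\<^sup>2 + (cmod (b n))\<^sup>2) / 2)"
    using a b unfolding l2_iff
    by (intro suminf_le prod_le_amgm summable_prod[OF a b] summable_divide summable_add) auto
  also have "\<dots> = (sq a + sq b) / 2" using a b unfolding l2_iff sq_def
    by (subst suminf_divide) (auto intro: summable_add simp: suminf_add)
  finally show ?thesis .
qed

lemma CS: "a \<in> l2 \<Longrightarrow> b \<in> l2 \<Longrightarrow> (\<Sum>n. cmod (a n) * cmod (b n)) \<le> sqrt (sq a) * sqrt (sq b)"
proof -
  assume a: "a \<in> l2" and b: "b \<in> l2"
  show ?thesis
  proof (rule suminf_le_const[OF summable_prod[OF a b]])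
    fix N
    have "(\<Sum>n<N. cmod (a n) * cmod (b n))\<^sup>2 \<le> (\<Sum>n<N. (cmod (a n))\<^sup>2) * (\<Sum>n<N. (cmod (b n))\<^sup>2)"
      by (rule Cauchy_Schwarz_ineq_sum)
    also have "\<dots> \<le> sq a * sq b" unfolding sq_def using a b unfolding l2_iff
      by (intro mult_mono sum_le_suminf sum_nonneg) (auto intro: suminf_nonneg)
    finally have "(\<Sum>n<N. cmod (a n) * cmod (b n))\<^sup>2 \<le> sq a * sq b" .
    hence "(\<Sum>n<N. cmod (a n) * cmod (b n)) \<le> sqrt (sq a * sq b)"
      by (rule real_le_rsqrt)
    thus "(\<Sum>n<N. cmod (a n) * cmod (b n)) \<le> sqrt (sq a) * sqrt (sq b)"
      by (simp add: real_sqrt_mult)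
  qed
qed

lemma l2inner_self: "a \<in> l2 \<Longrightarrow> l2inner a a = complex_of_real (sq a)"
proof -
  assume a: "a \<in> l2"
  have eq: "(\<lambda>n. a n * cnj (a n)) = (\<lambda>n. complex_of_real ((cmod (a n))\<^sup>2))"
    by (rule ext) (rule complex_norm_square[symmetric])
  have "l2inner a a = (\<Sum>n. complex_of_real ((cmod (a n))\<^sup>2))" unfolding l2inner_def eq ..
  also have "\<dots> = complex_of_real (sq a)" unfolding sq_def using a unfolding l2_iff by (rule suminf_of_real[symmetric])
  finally show ?thesis .
qed

lemma l2inner_cnj: "a \<in> l2 \<Longrightarrow> b \<in> l2 \<Longrightarrow> cnj (l2inner a b) = l2inner b a"
proof -
  assume a: "a \<in> l2" and b: "b \<in> l2"
  have s1: "(\<lambda>n. a n * cnj (b n)) sums l2inner a b"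
    unfolding l2inner_def using summable_inner[OF a b] by (rule summable_sums)
  have s2: "(\<lambda>n. cnj (a n * cnj (b n))) sums cnj (l2inner a b)"
    unfolding sums_cnj by (rule s1)
  have eq: "(\<lambda>n. cnj (a n * cnj (b n))) = (\<lambda>n. b n * cnj (a n))"
    by (rule ext) (simp add: mult.commute)
  have "(\<lambda>n. b n * cnj (a n)) sums cnj (l2inner a b)" using s2 unfolding eq .
  hence "l2inner b a = cnj (l2inner a b)" unfolding l2inner_def by (rule sums_unique[symmetric])
  thus ?thesis by simp
qed



lemma l2inner_diff_right: "a \<in> l2 \<Longrightarrow> b \<in> l2 \<Longrightarrow> c \<in> l2 \<Longrightarrow>
  l2inner a (\<lambda>n. b n - c n) = l2inner a b - l2inner a c"
  unfolding l2inner_def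
  by (simp add: right_diff_distrib suminf_diff summable_inner)

lemma l2inner_diff_left: "a \<in> l2 \<Longrightarrow> b \<in> l2 \<Longrightarrow> c \<in> l2 \<Longrightarrow>
  l2inner (\<lambda>n. a n - b n) c = l2inner a c - l2inner b c"
  unfolding l2inner_def
  by (simp add: left_diff_distrib suminf_diff summable_inner)

lemma l2inner_scale_right: "a \<in> l2 \<Longrightarrow> b \<in> l2 \<Longrightarrow>
  l2inner a (\<lambda>n. k * b n) = cnj k * l2inner a b"
proof -
  assume a: "a \<in> l2" and b: "b \<in> l2"
  have "(\<lambda>n. a n * cnj (k * b n)) = (\<lambda>n. cnj k * (a n * cnj (b n)))" by (auto simp: fun_eq_iff)
  thus ?thesis unfolding l2inner_def using summable_inner[OF a b] by (simp add: suminf_mult)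
qed

lemma l2inner_scale_left: "a \<in> l2 \<Longrightarrow> b \<in> l2 \<Longrightarrow>
  l2inner (\<lambda>n. k * a n) b = k * l2inner a b"
proof -
  assume a: "a \<in> l2" and b: "b \<in> l2"
  have "(\<lambda>n. k * a n * cnj (b n)) = (\<lambda>n. k * (a n * cnj (b n)))" by (auto simp: fun_eq_iff)
  thus ?thesis unfolding l2inner_def using summable_inner[OF a b] by (simp add: suminf_mult)
qed

lemma l2inner_sum_right: "finite E \<Longrightarrow> E \<subseteq> l2 \<Longrightarrow> a \<in> l2 \<Longrightarrow>
  l2inner a (\<lambda>n. \<Sum>e\<in>E. \<alpha> e * e n) = (\<Sum>e\<in>E. cnj (\<alpha> e) * l2inner a e)"
proof -
  assume E: "finite E" "E \<subseteq> l2" and a: "a \<in> l2"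
  have "(\<lambda>n. a n * cnj (\<Sum>e\<in>E. \<alpha> e * e n)) = (\<lambda>n. \<Sum>e\<in>E. cnj (\<alpha> e) * (a n * cnj (e n)))"
    by (auto simp: fun_eq_iff sum_distrib_left algebra_simps)
  moreover have "(\<Sum>n. \<Sum>e\<in>E. cnj (\<alpha> e) * (a n * cnj (e n))) = (\<Sum>e\<in>E. \<Sum>n. cnj (\<alpha> e) * (a n * cnj (e n)))"
    using E a by (intro suminf_sum summable_mult summable_inner) auto
  moreover have "\<And>e. e \<in> E \<Longrightarrow> (\<Sum>n. cnj (\<alpha> e) * (a n * cnj (e n))) = cnj (\<alpha> e) * l2inner a e"
    unfolding l2inner_def using E a by (intro suminf_mult summable_inner) auto
  ultimately show ?thesis unfolding l2inner_def by simp
qed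

lemma sq_ge_term: "c \<in> l2 \<Longrightarrow> (cmod (c n))\<^sup>2 \<le> sq c"
  unfolding sq_def l2_iff using sum_le_suminf[of "\<lambda>n. (cmod (c n))\<^sup>2" "{n}"] by auto

definition Kset :: "('x \<Rightarrow> nat \<Rightarrow> complex) \<Rightarrow> (nat \<Rightarrow> complex) set" where
  "Kset W = {c \<in> l2. \<forall>x. l2inner (W x) c = 0}"

fun gs :: "(nat \<Rightarrow> complex) list \<Rightarrow> (nat \<Rightarrow> complex) list" where
  "gs [] = []"
| "gs (v # vs) = (let es = gs vs; w = (\<lambda>n. v n - (\<Sum>e\<in>set es. l2inner v e * e n))
     in (\<lambda>n. complex_of_real (1 / sqrt (sq w)) * w n) # es)"

fun tri :: "(nat \<Rightarrow> complex) list \<Rightarrow> bool" where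
  "tri [] = True"
| "tri (v # vs) = ((\<exists>s. v s = 1 \<and> (\<forall>u\<in>set vs. u s = 0)) \<and> tri vs)"

definition ONset :: "(nat \<Rightarrow> complex) set \<Rightarrow> bool" where
  "ONset E \<longleftrightarrow> (\<forall>e\<in>E. l2inner e e = 1) \<and> (\<forall>e\<in>E. \<forall>e'\<in>E. e \<noteq> e' \<longrightarrow> l2inner e e' = 0)"

lemma gs_props:
  assumes W: "\<And>x. W x \<in> l2"
  shows "tri vs \<Longrightarrow> set vs \<subseteq> Kset W \<Longrightarrow>
    set (gs vs) \<subseteq> Kset W \<and> distinct (gs vs) \<and> length (gs vs) = length vs \<and> ONset (set (gs vs)) \<and>
    (\<forall>t. (\<forall>u\<in>set vs. u t = 0) \<longrightarrow> (\<forall>e\<in>set (gs vs). e t = 0))"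
proof (induction vs)
  case Nil thus ?case by (simp add: ONset_def)
next
  case (Cons v vs)
  define es where "es = gs vs"
  define E where "E = set es"
  define w where "w = (\<lambda>n. v n - (\<Sum>e\<in>E. l2inner v e * e n))"
  define k where "k = complex_of_real (1 / sqrt (sq w))"
  define e0 where "e0 = (\<lambda>n. k * w n)"
  have gsv: "gs (v # vs) = e0 # es" by (simp add: es_def E_def w_def k_def e0_def Let_def)
  have IH: "E \<subseteq> Kset W" "distinct es" "length es = length vs" "ONset E"
     "\<And>t. (\<forall>u\<in>set vs. u t = 0) \<Longrightarrow> (\<forall>e\<in>E. e t = 0)"
    using Cons by (auto simp: es_def E_def)
  have vK: "v \<in> Kset W" using Cons.prems by auto
  have El2: "E \<subseteq> l2" and fE: "finite E" using IH(1) by (auto simp: Kset_def E_def)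
  have vl2: "v \<in> l2" using vK by (simp add: Kset_def)
  have sl2: "(\<lambda>n. \<Sum>e\<in>E. l2inner v e * e n) \<in> l2" using l2_sum[OF fE El2] .
  have wl2: "w \<in> l2" unfolding w_def by (rule l2_diff[OF vl2 sl2])
  have wK: "w \<in> Kset W"
  proof -
    { fix x
      have "l2inner (W x) w = l2inner (W x) v - (\<Sum>e\<in>E. cnj (l2inner v e) * l2inner (W x) e)"
        unfolding w_def using l2inner_diff_right[OF W vl2 sl2] l2inner_sum_right[OF fE El2 W] by simp
      also have "\<dots> = 0" using vK IH(1) by (auto simp: Kset_def intro!: sum.neutral)
      finally have "l2inner (W x) w = 0" . }
    thus ?thesis using wl2 by (simp add: Kset_def)
  qed
  obtain s where s: "v s = 1" "\<forall>u\<in>set vs. u s = 0" using Cons.prems by auto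
  have "w s = 1" using IH(5)[OF s(2)] s(1) by (simp add: w_def sum.neutral)
  hence sqw: "1 \<le> sq w" using sq_ge_term[OF wl2, of s] by simp
  have orth_w: "l2inner w e' = 0" if e': "e' \<in> E" for e'
  proof -
    have e'l2: "e' \<in> l2" using El2 e' by auto
    have "l2inner w e' = l2inner v e' - l2inner (\<lambda>n. \<Sum>e\<in>E. l2inner v e * e n) e'"
      unfolding w_def by (rule l2inner_diff_left[OF vl2 sl2 e'l2])
    also have "l2inner (\<lambda>n. \<Sum>e\<in>E. l2inner v e * e n) e' = cnj (l2inner e' (\<lambda>n. \<Sum>e\<in>E. l2inner v e * e n))"
      using l2inner_cnj[OF e'l2 sl2] by simp
    also have "\<dots> = cnj (\<Sum>e\<in>E. cnj (l2inner v e) * l2inner e' e)"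
      using l2inner_sum_right[OF fE El2 e'l2] by simp
    also have "(\<Sum>e\<in>E. cnj (l2inner v e) * l2inner e' e) = (\<Sum>e\<in>E. cnj (l2inner v e) * (if e = e' then 1 else 0))"
      using IH(4) e' by (intro sum.cong) (auto simp: ONset_def)
    also have "\<dots> = cnj (l2inner v e')" using fE e' by (simp add: if_distrib sum.delta' cong: if_cong)
    finally show ?thesis by simp
  qed
  have r: "sqrt (sq w) * sqrt (sq w) = sq w" "sqrt (sq w) > 0" using sqw by auto
  have kr: "(1 / sqrt (sq w)) * (1 / sqrt (sq w)) * sq w = 1" using r by (simp add: field_simps)
  have kk: "k * cnj k * complex_of_real (sq w) = 1"
    unfolding k_def complex_cnj_complex_of_real of_real_mult[symmetric] kr by simp
  have e0l2: "e0 \<in> l2" unfolding e0_def by (rule l2_scale[OF wl2])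
  have e0e0: "l2inner e0 e0 = 1"
    unfolding e0_def using l2inner_scale_left[OF wl2 l2_scale[OF wl2]] l2inner_scale_right[OF wl2 wl2]
      l2inner_self[OF wl2] kk by (simp add: mult.assoc)
  have e0E: "l2inner e0 e' = 0" if "e' \<in> E" for e'
    unfolding e0_def using l2inner_scale_left[OF wl2, of e'] orth_w[OF that] El2 that by auto
  have Ee0: "l2inner e' e0 = 0" if "e' \<in> E" for e'
    using l2inner_cnj[OF e0l2, of e'] e0E[OF that] El2 that by auto
  have e0notin: "e0 \<notin> E" using e0E e0e0 by force
  have e0K: "e0 \<in> Kset W"
    using wK e0l2 l2inner_scale_right[OF W wl2] unfolding e0_def Kset_def by auto
  have zeros: "\<forall>e\<in>set (gs (v # vs)). e t = 0" if "\<forall>u\<in>set (v # vs). u t = 0" for t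
  proof -
    have "\<forall>e\<in>E. e t = 0" using IH(5)[of t] that by auto
    moreover have "v t = 0" using that by auto
    ultimately have "e0 t = 0" by (simp add: e0_def w_def sum.neutral)
    thus ?thesis using \<open>\<forall>e\<in>E. e t = 0\<close> unfolding gsv E_def by simp
  qed
  have c1: "set (e0 # es) \<subseteq> Kset W" using IH(1) e0K by (simp add: E_def)
  have c2: "distinct (e0 # es)" using IH(2) e0notin by (simp add: E_def)
  have c3: "length (e0 # es) = length (v # vs)" using IH(3) by simp
  have c4: "ONset (set (e0 # es))"
    unfolding ONset_def
  proof (intro conjI ballI impI)
    fix e assume "e \<in> set (e0 # es)"
    thus "l2inner e e = 1" using e0e0 IH(4) unfolding ONset_def E_def by auto
  next
    fix e e' assume e: "e \<in> set (e0 # es)" and e': "e' \<in> set (e0 # es)" and ne: "e \<noteq> e'"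
    show "l2inner e e' = 0"
    proof (cases "e = e0")
      case True
      hence "e' \<in> E" using e' ne by (auto simp: E_def)
      thus ?thesis using e0E True by simp
    next
      case False
      hence eE: "e \<in> E" using e by (auto simp: E_def)
      show ?thesis
      proof (cases "e' = e0")
        case True thus ?thesis using Ee0 eE by simp
      next
        case False
        hence "e' \<in> E" using e' by (auto simp: E_def)
        thus ?thesis using IH(4) eE ne unfolding ONset_def by blast
      qed
    qed
  qed
  show ?case
    unfolding gsv using c1 c2 c3 c4 zeros[unfolded gsv] by blast
qed



lemma fun_minus_eta: "f - g = (\<lambda>n. f n - g n)"
  by (rule ext) simp

lemma sq_tri:
  assumes a: "a \<in> l2" and b: "b \<in> l2" and y: "y \<in> l2"
  shows "sq (\<lambda>n. a n - b n) \<le> 2 * sq (\<lambda>n. a n - y n) + 2 * sq (\<lambda>n. b n - y n)"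
proof -
  have s1: "summable (\<lambda>n. (cmod (a n - y n))\<^sup>2)" using l2_diff[OF a y] by (simp add: l2_iff)
  have s2: "summable (\<lambda>n. (cmod (b n - y n))\<^sup>2)" using l2_diff[OF b y] by (simp add: l2_iff)
  have s0: "summable (\<lambda>n. (cmod (a n - b n))\<^sup>2)" using l2_diff[OF a b] by (simp add: l2_iff)
  have pt: "(cmod (a n - b n))\<^sup>2 \<le> 2 * (cmod (a n - y n))\<^sup>2 + 2 * (cmod (b n - y n))\<^sup>2" for n
    using cmod_diff_sq[of "a n - y n" "b n - y n"] by simp
  have "sq (\<lambda>n. a n - b n) \<le> (\<Sum>n. 2 * (cmod (a n - y n))\<^sup>2 + 2 * (cmod (b n - y n))\<^sup>2)"
    unfolding sq_def by (rule suminf_le[OF pt s0]) (intro summable_add summable_mult s1 s2)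
  also have "\<dots> = 2 * sq (\<lambda>n. a n - y n) + 2 * sq (\<lambda>n. b n - y n)"
    unfolding sq_def using s1 s2
    by (subst suminf_add[symmetric]) (auto intro: summable_mult simp: suminf_mult)
  finally show ?thesis .
qed

lemma sqrt_lt_quarter: "0 \<le> x \<Longrightarrow> sqrt x < 1/4 \<Longrightarrow> x < 1/16"
proof -
  assume x: "0 \<le> x" and s: "sqrt x < 1/4"
  have "(sqrt x)^2 < (1/4)^2" by (rule power_strict_mono[OF s]) (use x in auto)
  moreover have "(1/4::real)^2 = 1/16" by (simp add: power2_eq_square)
  ultimately show ?thesis using x by simp
qed

lemma net:
  assumes T: "l2_compact T" and K: "K \<subseteq> l2"
    and H: "\<And>c c'. c \<in> K \<Longrightarrow> c' \<in> K \<Longrightarrow> sq (\<lambda>n. c n - c' n) \<le> sq (\<lambda>n. T c n - T c' n)"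
  shows "\<exists>Y. finite Y \<and> Y \<subseteq> l2 \<and> (\<forall>c\<in>K. sq c \<le> 1 \<longrightarrow> (\<exists>y\<in>Y. sq (\<lambda>n. c n - y n) < 1/2))"
proof (rule ccontr)
  define B where "B = {c\<in>K. sq c \<le> 1}"
  assume neg: "\<not> ?thesis"
  have step: "\<exists>c. c \<in> B \<and> (\<forall>y\<in>set l. 1/2 \<le> sq (\<lambda>n. c n - y n))" if "set l \<subseteq> B" for l
  proof -
    have "finite (set l)" "set l \<subseteq> l2" using that K B_def by auto
    hence "\<not> (\<forall>c\<in>K. sq c \<le> 1 \<longrightarrow> (\<exists>y\<in>set l. sq (\<lambda>n. c n - y n) < 1/2))" using neg by blast
    thus ?thesis by (auto simp: B_def not_less)
  qed
  define nxt where "nxt l = (SOME c. c \<in> B \<and> (\<forall>y\<in>set l. 1/2 \<le> sq (\<lambda>n. c n - y n)))" for l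
  have nxt: "nxt l \<in> B \<and> (\<forall>y\<in>set l. 1/2 \<le> sq (\<lambda>n. nxt l n - y n))" if "set l \<subseteq> B" for l
    using someI_ex[OF step[OF that]] unfolding nxt_def .
  define P where "P = rec_nat [] (\<lambda>_ l. nxt l # l)"
  have P0: "P 0 = []" and PS: "P (Suc n) = nxt (P n) # P n" for n by (simp_all add: P_def)
  define X where "X n = nxt (P n)" for n
  have PB: "set (P n) \<subseteq> B \<and> set (P n) = X ` {..<n}" for n
  proof (induction n)
    case 0 thus ?case by (simp add: P0)
  next
    case (Suc n)
    have "X n \<in> B" unfolding X_def using nxt[of "P n"] Suc.IH by blast
    thus ?case using Suc by (auto simp: PS X_def lessThan_Suc)
  qed
  have XB: "X n \<in> B" for n unfolding X_def using nxt[of "P n"] PB[of n] by blast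
  have sep: "1/2 \<le> sq (\<lambda>k. X n k - X m k)" if "m < n" for m n
  proof -
    have "X m \<in> set (P n)" using PB[of n] that by auto
    moreover have "\<forall>y\<in>set (P n). 1/2 \<le> sq (\<lambda>k. nxt (P n) k - y k)" using nxt[of "P n"] PB[of n] by blast
    ultimately show ?thesis unfolding X_def by blast
  qed
  have Xl2: "X n \<in> l2" for n using XB K B_def by auto
  have Xbd: "l2norm (X n) \<le> 1" for n using XB unfolding B_def l2norm_sq by auto
  obtain r L where r: "strict_mono r" and L: "L \<in> l2"
    and lim: "(\<lambda>k. l2norm (T (X (r k)) - L)) \<longlonglongrightarrow> 0"
    using T Xl2 Xbd unfolding l2_compact_def by blast
  have TXl2: "T (X n) \<in> l2" for n using T Xl2 unfolding l2_compact_def by blast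
  have "eventually (\<lambda>k. l2norm (T (X (r k)) - L) < 1/4) sequentially"
    using order_tendstoD(2)[OF lim, of "1/4"] by simp
  then obtain k0 where k0: "\<And>k. k \<ge> k0 \<Longrightarrow> l2norm (T (X (r k)) - L) < 1/4"
    unfolding eventually_sequentially by blast
  have small: "sq (\<lambda>n. T (X (r k)) n - L n) < 1/16" if "k \<ge> k0" for k
  proof -
    have "sqrt (sq (\<lambda>n. T (X (r k)) n - L n)) < 1/4"
      using k0[OF that] unfolding l2norm_sq fun_minus_eta .
    thus ?thesis using sq_nonneg[OF l2_diff[OF TXl2 L]] sqrt_lt_quarter by blast
  qed
  define a where "a = r (Suc k0)"
  define b where "b = r k0"
  have ab: "b < a" using r unfolding a_def b_def strict_mono_def by auto
  have "sq (\<lambda>n. X a n - X b n) \<le> sq (\<lambda>n. T (X a) n - T (X b) n)"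
    using H XB B_def by auto
  also have "\<dots> \<le> 2 * sq (\<lambda>n. T (X a) n - L n) + 2 * sq (\<lambda>n. T (X b) n - L n)"
    by (rule sq_tri[OF TXl2 TXl2 L])
  also have "\<dots> < 1/2" using small[of "Suc k0"] small[of k0] unfolding a_def b_def by simp
  finally show False using sep[OF ab] by simp
qed

lemma sq_of_inner: "a \<in> l2 \<Longrightarrow> l2inner a a = 1 \<Longrightarrow> sq a = 1"
  using l2inner_self[of a] by simp

lemma sq_diff_on:
  assumes e: "e \<in> l2" and e': "e' \<in> l2" and n: "l2inner e e = 1" "l2inner e' e' = 1"
    and o: "l2inner e e' = 0" "l2inner e' e = 0"
  shows "sq (\<lambda>n. e n - e' n) = 2"
proof -
  have d: "(\<lambda>n. e n - e' n) \<in> l2" by (rule l2_diff[OF e e'])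
  have "l2inner (\<lambda>n. e n - e' n) (\<lambda>n. e n - e' n)
        = l2inner e (\<lambda>n. e n - e' n) - l2inner e' (\<lambda>n. e n - e' n)"
    by (rule l2inner_diff_left[OF e e' d])
  also have "\<dots> = 2" using l2inner_diff_right[OF e e e'] l2inner_diff_right[OF e' e e'] n o by simp
  finally have "complex_of_real (sq (\<lambda>n. e n - e' n)) = complex_of_real 2" using l2inner_self[OF d] by simp
  thus ?thesis by (simp only: of_real_eq_iff)
qed

lemma ortho_card:
  assumes Y: "finite Y" "Y \<subseteq> l2" "\<forall>c\<in>K. sq c \<le> 1 \<longrightarrow> (\<exists>y\<in>Y. sq (\<lambda>n. c n - y n) < 1/2)"
    and E: "E \<subseteq> K" "K \<subseteq> l2" "ONset E"
  shows "card E \<le> card Y"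
proof -
  have El2: "E \<subseteq> l2" using E by auto
  have sq1: "sq e = 1" if "e \<in> E" for e using E(3) El2 that sq_of_inner unfolding ONset_def by blast
  define ch where "ch e = (SOME y. y \<in> Y \<and> sq (\<lambda>n. e n - y n) < 1/2)" for e
  have ch: "ch e \<in> Y \<and> sq (\<lambda>n. e n - ch e n) < 1/2" if "e \<in> E" for e
  proof -
    have "e \<in> K" "sq e \<le> 1" using E(1) sq1[OF that] that by auto
    hence "\<exists>y. y \<in> Y \<and> sq (\<lambda>n. e n - y n) < 1/2" using Y(3) by blast
    thus ?thesis unfolding ch_def by (rule someI_ex)
  qed
  have "inj_on ch E"
  proof (rule inj_onI, rule ccontr)
    fix e e' assume e: "e \<in> E" and e': "e' \<in> E" and eq: "ch e = ch e'" and ne: "e \<noteq> e'"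
    have yl2: "ch e \<in> l2" using ch[OF e] Y(2) by auto
    have "sq (\<lambda>n. e n - e' n) \<le> 2 * sq (\<lambda>n. e n - ch e n) + 2 * sq (\<lambda>n. e' n - ch e n)"
      using sq_tri El2 e e' yl2 by blast
    also have "\<dots> < 2" using ch[OF e] ch[OF e'] eq by simp
    finally have "sq (\<lambda>n. e n - e' n) < 2" .
    moreover have "sq (\<lambda>n. e n - e' n) = 2"
      using E(3) e e' ne El2 by (intro sq_diff_on) (auto simp: ONset_def)
    ultimately show False by simp
  qed
  moreover have "ch ` E \<subseteq> Y" using ch by auto
  ultimately show ?thesis using Y(1) by (rule card_inj_on_le)
qed



lemma cinner_diff_left: "cinner (x - y) z = cinner x z - cinner y z"
proof -
  have "cinner ((x - y) + y) z = cinner (x - y) z + cinner y z" by (rule cinner_add_left)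
  thus ?thesis by simp
qed

lemma hnorm_sq: "(hnorm x)\<^sup>2 = Re (cinner x x)"
  unfolding hnorm_def using cinner_ge_zero[of x] by simp

lemma quad_bound:
  fixes R q e :: real
  assumes q: "q \<ge> 0" and H: "\<And>t. -e < 2*t*R + t^2*q"
  shows "R^2 \<le> q*e"
proof -
  have e: "e > 0" using H[of 0] by simp
  show ?thesis
  proof (cases "q = 0")
    case True
    have "R = 0"
    proof (rule ccontr)
      assume "R \<noteq> 0"
      hence "2 * (-e/(2*R)) * R + (-e/(2*R))^2 * q = -e" using True by (simp add: field_simps)
      thus False using H[of "-e/(2*R)"] by simp
    qed
    thus ?thesis using True by simp
  next
    case False
    hence qp: "q > 0" using q by simp
    have "2 * (-R/q) * R + (-R/q)^2 * q = - (R^2 / q)" using qp by (simp add: field_simps power2_eq_square)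
    hence "-e < - (R^2/q)" using H[of "-R/q"] by simp
    hence "R^2 / q < e" by simp
    thus ?thesis using qp by (simp add: field_simps)
  qed
qed

lemma cmod_add_real_sq:
  fixes a b :: complex and t :: real
  shows "(cmod (a + complex_of_real t * b))\<^sup>2 = (cmod a)\<^sup>2 + 2 * t * Re (b * cnj a) + t\<^sup>2 * (cmod b)\<^sup>2"
  by (simp only: cmod_power2) (simp add: power2_eq_square algebra_simps)

lemma suminf_add2: "summable f \<Longrightarrow> summable g \<Longrightarrow> (\<Sum>n. f n + g n) = suminf f + (suminf g :: real)"
  by (rule suminf_add[symmetric])

lemma suminf_diff2: "summable f \<Longrightarrow> summable g \<Longrightarrow> (\<Sum>n. f n - g n) = suminf f - (suminf g :: real)"
  by (rule suminf_diff[symmetric])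

lemma sq_add_real:
  assumes a: "a \<in> l2" and b: "b \<in> l2"
  shows "sq (\<lambda>n. a n + complex_of_real t * b n) = sq a + 2 * t * Re (l2inner b a) + t\<^sup>2 * sq b"
proof -
  have sa: "summable (\<lambda>n. (cmod (a n))\<^sup>2)" and sb: "summable (\<lambda>n. (cmod (b n))\<^sup>2)"
    using a b by (auto simp: l2_iff)
  have sr: "summable (\<lambda>n. Re (b n * cnj (a n)))" using summable_Re[OF summable_inner[OF b a]] .
  have "sq (\<lambda>n. a n + complex_of_real t * b n)
      = (\<Sum>n. (cmod (a n))\<^sup>2 + (2 * t * Re (b n * cnj (a n)) + t\<^sup>2 * (cmod (b n))\<^sup>2))"
    unfolding sq_def cmod_add_real_sq by (simp add: add.assoc)
  also have "\<dots> = sq a + (\<Sum>n. 2 * t * Re (b n * cnj (a n)) + t\<^sup>2 * (cmod (b n))\<^sup>2)"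
    unfolding sq_def using sa sr sb by (subst suminf_add2) (auto intro: summable_add summable_mult)
  also have "(\<Sum>n. 2 * t * Re (b n * cnj (a n)) + t\<^sup>2 * (cmod (b n))\<^sup>2)
      = (\<Sum>n. 2 * t * Re (b n * cnj (a n))) + (\<Sum>n. t\<^sup>2 * (cmod (b n))\<^sup>2)"
    using sr sb by (subst suminf_add2) (auto intro: summable_mult)
  also have "(\<Sum>n. 2 * t * Re (b n * cnj (a n))) = 2 * t * Re (l2inner b a)"
    unfolding l2inner_def using sr summable_inner[OF b a] by (simp add: suminf_mult Re_suminf)
  also have "(\<Sum>n. t\<^sup>2 * (cmod (b n))\<^sup>2) = t\<^sup>2 * sq b"
    unfolding sq_def using sb by (simp add: suminf_mult)
  finally show ?thesis by simp
qed

lemma cmod_parallel: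
  fixes a b :: complex
  shows "(cmod (a - b))\<^sup>2 = 2 * (cmod a)\<^sup>2 + 2 * (cmod b)\<^sup>2 - 4 * (cmod ((a + b) / 2))\<^sup>2"
  by (simp only: cmod_power2) (simp add: power2_eq_square field_simps)

lemma sq_parallel:
  assumes a: "a \<in> l2" and b: "b \<in> l2"
  shows "sq (\<lambda>n. a n - b n) = 2 * sq a + 2 * sq b - 4 * sq (\<lambda>n. (a n + b n) / 2)"
proof -
  have sa: "summable (\<lambda>n. (cmod (a n))\<^sup>2)" and sb: "summable (\<lambda>n. (cmod (b n))\<^sup>2)"
    using a b by (auto simp: l2_iff)
  have "(\<lambda>n. (a n + b n) / 2) = (\<lambda>n. (1/2) * (a n + b n))" by (auto simp: fun_eq_iff)
  hence sm: "summable (\<lambda>n. (cmod ((a n + b n) / 2))\<^sup>2)"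
    using l2_scale[OF l2_add[OF a b], of "1/2"] by (simp add: l2_iff)
  have "sq (\<lambda>n. a n - b n) = (\<Sum>n. 2 * (cmod (a n))\<^sup>2 + 2 * (cmod (b n))\<^sup>2 - 4 * (cmod ((a n + b n) / 2))\<^sup>2)"
    unfolding sq_def cmod_parallel ..
  also have "\<dots> = (\<Sum>n. 2 * (cmod (a n))\<^sup>2 + 2 * (cmod (b n))\<^sup>2) - (\<Sum>n. 4 * (cmod ((a n + b n) / 2))\<^sup>2)"
    using sa sb sm by (subst suminf_diff2) (auto intro: summable_add summable_mult)
  also have "(\<Sum>n. 2 * (cmod (a n))\<^sup>2 + 2 * (cmod (b n))\<^sup>2) = 2 * sq a + 2 * sq b"
    unfolding sq_def using sa sb by (subst suminf_add2) (auto intro: summable_mult simp: suminf_mult)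
  also have "(\<Sum>n. 4 * (cmod ((a n + b n) / 2))\<^sup>2) = 4 * sq (\<lambda>n. (a n + b n) / 2)"
    unfolding sq_def using sm by (simp add: suminf_mult)
  finally show ?thesis .
qed



lemma exists_d:
  fixes h :: "nat \<Rightarrow> 'a::complex_hilbert"
  assumes fr: "frame h" and frS: "frame_on (UNIV - S) h" and sS: "s \<in> S"
  shows "\<exists>d\<in>l2. (\<forall>x. l2inner (analysis_op h x) d = 0) \<and> d s = 1 \<and> (\<forall>t\<in>S. t \<noteq> s \<longrightarrow> d t = 0)"
proof -
  obtain A B where AB: "0 < A" "A \<le> B" and fS: "\<And>x. summable (\<lambda>n. if n \<in> UNIV - S then (cmod (cinner x (h n)))\<^sup>2 else 0) \<and>
      A * (hnorm x)\<^sup>2 \<le> (\<Sum>n. if n \<in> UNIV - S then (cmod (cinner x (h n)))\<^sup>2 else 0) \<and>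
      (\<Sum>n. if n \<in> UNIV - S then (cmod (cinner x (h n)))\<^sup>2 else 0) \<le> B * (hnorm x)\<^sup>2"
    using frS unfolding frame_on_def by blast
  obtain A0 B0 where AB0: "0 < A0" "A0 \<le> B0" and f0: "\<And>x. summable (\<lambda>n. if n \<in> UNIV then (cmod (cinner x (h n)))\<^sup>2 else 0) \<and>
      A0 * (hnorm x)\<^sup>2 \<le> (\<Sum>n. if n \<in> UNIV then (cmod (cinner x (h n)))\<^sup>2 else 0) \<and>
      (\<Sum>n. if n \<in> UNIV then (cmod (cinner x (h n)))\<^sup>2 else 0) \<le> B0 * (hnorm x)\<^sup>2"
    using fr unfolding frame_def frame_on_def by blast
  have B0: "B0 > 0" "B > 0" using AB AB0 by auto
  define ua where "ua x = (\<lambda>n. if n \<in> UNIV - S then cinner x (h n) else 0)" for x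
  have uaeq: "(\<lambda>n. (cmod (ua x n))\<^sup>2) = (\<lambda>n. if n \<in> UNIV - S then (cmod (cinner x (h n)))\<^sup>2 else 0)" for x
    by (auto simp: ua_def fun_eq_iff)
  have ual2: "ua x \<in> l2" for x using fS[of x] uaeq[of x] by (simp add: l2_iff)
  have Qlow: "A * (hnorm x)\<^sup>2 \<le> sq (ua x)" for x unfolding sq_def uaeq using fS by blast
  have Qup: "sq (ua x) \<le> B * (hnorm x)\<^sup>2" for x unfolding sq_def uaeq using fS by blast
  have Ul2: "(\<lambda>n. cinner x (h n)) \<in> l2" for x using f0[of x] by (simp add: l2_iff)
  have Uup: "sq (\<lambda>n. cinner x (h n)) \<le> B0 * (hnorm x)\<^sup>2" for x using f0[of x] by (simp add: sq_def)
  have ua_add: "ua (z + complex_of_real t *\<^sub>C x) = (\<lambda>n. ua z n + complex_of_real t * ua x n)" for z x t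
    by (auto simp: ua_def fun_eq_iff cinner_add_left cinner_scaleC_left)
  have ua_diff: "ua (u - v) = (\<lambda>n. ua u n - ua v n)" for u v
    by (auto simp: ua_def fun_eq_iff cinner_diff_left)
  have ua_mid: "ua ((1/2) *\<^sub>C (u + v)) = (\<lambda>n. (ua u n + ua v n) / 2)" for u v
    by (auto simp: ua_def fun_eq_iff cinner_add_left cinner_scaleC_left)
  have ua_i: "ua (\<i> *\<^sub>C x) = (\<lambda>n. \<i> * ua x n)" for x
    by (auto simp: ua_def fun_eq_iff cinner_scaleC_left)
  define L where "L x = Re (cinner x (h s))" for x
  define J where "J z = sq (ua z) - 2 * L z" for z
  have Lbd: "(cmod (cinner z (h s)))\<^sup>2 \<le> B0 * (hnorm z)\<^sup>2" for z
    using sq_ge_term[OF Ul2, of z s] Uup[of z] by simp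
  have Jlow: "- (B0 / A) \<le> J z" for z
  proof -
    define c where "c = cmod (cinner z (h s))"
    have Lc: "L z \<le> c" unfolding L_def c_def by (rule complex_Re_le_cmod)
    have id: "(A/B0) * (c - B0/A)\<^sup>2 = (A/B0) * c\<^sup>2 - 2*c + B0/A"
      using AB B0 by (simp add: field_simps power2_eq_square)
    have "0 \<le> (A/B0) * (c - B0/A)\<^sup>2" using AB B0 by simp
    hence k: "2*c \<le> (A/B0) * c\<^sup>2 + B0/A" unfolding id by simp
    have "(A/B0) * c\<^sup>2 \<le> (A/B0) * (B0 * (hnorm z)\<^sup>2)"
      using Lbd[of z] AB B0 unfolding c_def by (intro mult_left_mono) auto
    also have "\<dots> = A * (hnorm z)\<^sup>2" using B0 by simp
    also have "\<dots> \<le> sq (ua z)" by (rule Qlow)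
    finally show ?thesis unfolding J_def using k Lc by simp
  qed
  define \<mu> where "\<mu> = Inf (range J)"
  have bdd: "bdd_below (range J)" using Jlow by (intro bdd_belowI2) 
  have \<mu>le: "\<mu> \<le> J w" for w unfolding \<mu>_def by (rule cInf_lower[OF rangeI bdd])
  have ex: "\<exists>z. J z < \<mu> + 1 / real (Suc k)" for k
  proof -
    have "Inf (range J) < \<mu> + 1 / real (Suc k)" unfolding \<mu>_def by simp
    then obtain y where "y \<in> range J" "y < \<mu> + 1 / real (Suc k)" using cInf_lessD[of "range J"] by blast
    thus ?thesis by auto
  qed
  then obtain zs where zs: "\<And>k. J (zs k) < \<mu> + 1 / real (Suc k)" by metis
  have Lmid: "L ((1/2) *\<^sub>C (u + v)) = (L u + L v) / 2" for u v
    by (simp add: L_def cinner_add_left cinner_scaleC_left)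
  have Qdiff: "sq (ua (zs m - zs n)) \<le> 2 / real (Suc m) + 2 / real (Suc n)" for m n
  proof -
    define u where "u = zs m"
    define v where "v = zs n"
    have "sq (ua (u - v)) = 2 * sq (ua u) + 2 * sq (ua v) - 4 * sq (ua ((1/2) *\<^sub>C (u + v)))"
      unfolding ua_diff ua_mid by (rule sq_parallel[OF ual2 ual2])
    also have "\<dots> = 2 * J u + 2 * J v - 4 * J ((1/2) *\<^sub>C (u + v))"
      unfolding J_def Lmid by (simp add: algebra_simps)
    also have "\<dots> \<le> 2 * (\<mu> + 1 / real (Suc m)) + 2 * (\<mu> + 1 / real (Suc n)) - 4 * \<mu>"
      using zs[of m] zs[of n] \<mu>le[of "(1/2) *\<^sub>C (u + v)"] unfolding u_def v_def by simp
    finally show ?thesis unfolding u_def v_def by simp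
  qed
  have cauchy: "\<forall>e>0. \<exists>N. \<forall>m\<ge>N. \<forall>n\<ge>N. sqrt (Re (cinner (zs m - zs n) (zs m - zs n))) < e"
  proof (intro allI impI)
    fix e :: real assume e: "e > 0"
    obtain N where N: "4 / (A * e\<^sup>2) < real N" using reals_Archimedean2 by blast
    have NN: "4 / (A * real (Suc N)) < e\<^sup>2"
    proof -
      have "4 / (A * e\<^sup>2) < real (Suc N)" using N by simp
      hence h4: "4 < real (Suc N) * (A * e\<^sup>2)" using AB e by (simp add: field_simps)
      have pos: "0 < A * real (Suc N)" using AB by simp
      show ?thesis unfolding pos_divide_less_eq[OF pos] using h4 by (simp add: algebra_simps)
    qed
    show "\<exists>N. \<forall>m\<ge>N. \<forall>n\<ge>N. sqrt (Re (cinner (zs m - zs n) (zs m - zs n))) < e"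
    proof (intro exI allI impI)
      fix m n assume m: "m \<ge> N" and n: "n \<ge> N"
      have "2 / real (Suc m) \<le> 2 / real (Suc N)" using m by (simp add: frac_le)
      moreover have "2 / real (Suc n) \<le> 2 / real (Suc N)" using n by (simp add: frac_le)
      ultimately have "A * (hnorm (zs m - zs n))\<^sup>2 \<le> 4 / real (Suc N)"
        using Qlow[of "zs m - zs n"] Qdiff[of m n] by simp
      hence "(hnorm (zs m - zs n))\<^sup>2 \<le> (4 / real (Suc N)) / A"
        using AB by (subst pos_le_divide_eq) (auto simp: mult.commute)
      hence "(hnorm (zs m - zs n))\<^sup>2 \<le> 4 / (A * real (Suc N))" by (simp add: mult.commute)
      hence "(hnorm (zs m - zs n))\<^sup>2 < e\<^sup>2" using NN by simp
      hence "hnorm (zs m - zs n) < e" using e by (simp add: power2_less_imp_less)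
      thus "sqrt (Re (cinner (zs m - zs n) (zs m - zs n))) < e" by (simp add: hnorm_def)
    qed
  qed
  obtain z where zlim: "(\<lambda>n. hnorm (zs n - z)) \<longlonglongrightarrow> 0"
    using hilbert_complete[OF cauchy] unfolding hnorm_def[symmetric] by blast
  have Ladd: "L (w + complex_of_real t *\<^sub>C x) = L w + t * L x" for w x t
    by (simp add: L_def cinner_add_left cinner_scaleC_left)
  have eul: "Re (l2inner (ua x) (ua z)) = L x" for x
  proof -
    define q where "q = sq (ua x)"
    have q0: "q \<ge> 0" unfolding q_def by (rule sq_nonneg[OF ual2])
    define R where "R k = Re (l2inner (ua x) (ua (zs k))) - L x" for k
    have Rb: "(R k)\<^sup>2 \<le> q * (1 / real (Suc k))" for k
    proof (rule quad_bound[OF q0])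
      fix t :: real
      have "J (zs k + complex_of_real t *\<^sub>C x) = J (zs k) + 2 * t * R k + t\<^sup>2 * q"
        unfolding J_def ua_add Ladd sq_add_real[OF ual2 ual2] R_def q_def by (simp add: algebra_simps)
      moreover have "\<mu> \<le> J (zs k + complex_of_real t *\<^sub>C x)" by (rule \<mu>le)
      ultimately show "- (1 / real (Suc k)) < 2 * t * R k + t\<^sup>2 * q" using zs[of k] by simp
    qed
    have R0: "R \<longlonglongrightarrow> 0"
    proof (rule Lim_null_comparison)
      show "eventually (\<lambda>k. norm (R k) \<le> sqrt (q * inverse (real (Suc k)))) sequentially"
      proof (intro always_eventually allI)
        fix k
        have "norm (R k) = sqrt ((R k)\<^sup>2)" by simp
        also have "\<dots> \<le> sqrt (q * inverse (real (Suc k)))"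
          using Rb[of k] by (intro real_sqrt_le_mono) (simp add: divide_inverse)
        finally show "norm (R k) \<le> sqrt (q * inverse (real (Suc k)))" .
      qed
      show "(\<lambda>k. sqrt (q * inverse (real (Suc k)))) \<longlonglongrightarrow> 0"
        using tendsto_real_sqrt[OF tendsto_mult[OF tendsto_const LIMSEQ_inverse_real_of_nat, of q]] by simp
    qed
    define c where "c = Re (l2inner (ua x) (ua z)) - L x"
    have Rc: "R \<longlonglongrightarrow> c"
    proof (rule LIM_zero_cancel, rule Lim_null_comparison)
      show "eventually (\<lambda>k. norm (R k - c) \<le> sqrt q * sqrt B * hnorm (zs k - z)) sequentially"
      proof (intro always_eventually allI)
        fix k
        have "R k - c = Re (l2inner (ua x) (ua (zs k)) - l2inner (ua x) (ua z))"
          unfolding R_def c_def by simp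
        also have "l2inner (ua x) (ua (zs k)) - l2inner (ua x) (ua z) = l2inner (ua x) (ua (zs k - z))"
          unfolding ua_diff by (rule l2inner_diff_right[OF ual2 ual2 ual2, symmetric])
        finally have "norm (R k - c) \<le> cmod (l2inner (ua x) (ua (zs k - z)))"
          by (simp add: abs_Re_le_cmod)
        also have "\<dots> \<le> (\<Sum>n. cmod (ua x n) * cmod (ua (zs k - z) n))" by (rule norm_l2inner[OF ual2 ual2])
        also have "\<dots> \<le> sqrt q * sqrt (sq (ua (zs k - z)))" unfolding q_def by (rule CS[OF ual2 ual2])
        also have "sqrt (sq (ua (zs k - z))) \<le> sqrt (B * (hnorm (zs k - z))\<^sup>2)"
          by (rule real_sqrt_le_mono[OF Qup])
        also have "sqrt (B * (hnorm (zs k - z))\<^sup>2) = sqrt B * hnorm (zs k - z)"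
          using cinner_ge_zero[of "zs k - z"] by (simp add: real_sqrt_mult hnorm_def)
        finally show "norm (R k - c) \<le> sqrt q * sqrt B * hnorm (zs k - z)"
          using q0 by (simp add: mult_left_mono mult.assoc)
      qed
      show "(\<lambda>k. sqrt q * sqrt B * hnorm (zs k - z)) \<longlonglongrightarrow> 0"
        using tendsto_mult[OF tendsto_const zlim, of "sqrt q * sqrt B"] by simp
    qed
    have "c = 0" using LIMSEQ_unique[OF Rc R0] .
    thus ?thesis unfolding c_def by simp
  qed
  have eulc: "l2inner (ua x) (ua z) = cinner x (h s)" for x
  proof (rule complex_eqI)
    show "Re (l2inner (ua x) (ua z)) = Re (cinner x (h s))" using eul[of x] by (simp add: L_def)
    have "Re (l2inner (ua (\<i> *\<^sub>C x)) (ua z)) = L (\<i> *\<^sub>C x)" by (rule eul)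
    moreover have "l2inner (ua (\<i> *\<^sub>C x)) (ua z) = \<i> * l2inner (ua x) (ua z)"
      unfolding ua_i by (rule l2inner_scale_left[OF ual2 ual2])
    ultimately show "Im (l2inner (ua x) (ua z)) = Im (cinner x (h s))"
      by (simp add: L_def cinner_scaleC_left)
  qed
  define d where "d = (\<lambda>n. (if n = s then 1 else 0) - ua z n)"
  have dl2: "d \<in> l2" unfolding d_def by (rule l2_diff[OF l2_single ual2])
  have ds: "d s = 1" using sS by (simp add: d_def ua_def)
  have dt: "\<forall>t\<in>S. t \<noteq> s \<longrightarrow> d t = 0" by (simp add: d_def ua_def)
  have dK: "l2inner (analysis_op h x) d = 0" for x
  proof -
    have U: "analysis_op h x = (\<lambda>n. cinner x (h n))" by (simp add: analysis_op_def fun_eq_iff)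
    have "l2inner (\<lambda>n. cinner x (h n)) d
        = l2inner (\<lambda>n. cinner x (h n)) (\<lambda>n. if n = s then 1 else 0) - l2inner (\<lambda>n. cinner x (h n)) (ua z)"
      unfolding d_def by (rule l2inner_diff_right[OF Ul2 l2_single ual2])
    also have "l2inner (\<lambda>n. cinner x (h n)) (\<lambda>n. if n = s then 1 else 0) = cinner x (h s)"
    proof -
      have "(\<lambda>n. cinner x (h n) * cnj (if n = s then 1 else 0)) = (\<lambda>n. if n = s then cinner x (h n) else 0)"
        by (auto simp: fun_eq_iff)
      thus ?thesis unfolding l2inner_def using sums_single[of s "\<lambda>n. cinner x (h n)"] by (simp add: sums_iff)
    qed
    also have "l2inner (\<lambda>n. cinner x (h n)) (ua z) = l2inner (ua x) (ua z)"
    proof -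
      have "(\<lambda>n. cinner x (h n) * cnj (ua z n)) = (\<lambda>n. ua x n * cnj (ua z n))"
        by (auto simp: fun_eq_iff ua_def)
      thus ?thesis unfolding l2inner_def by simp
    qed
    finally show ?thesis unfolding U eulc by simp
  qed
  show ?thesis using dl2 ds dt dK by blast
qed



lemma cinner_zero_left: "cinner 0 z = 0"
  using cinner_diff_left[of 0 0 z] by simp

lemma cinner_zero_right: "cinner z 0 = 0"
  using cinner_commute[of z 0] by (simp add: cinner_zero_left)

lemma analysis_l2: "frame h \<Longrightarrow> analysis_op h x \<in> l2"
  unfolding frame_def frame_on_def l2_iff analysis_op_def by auto

lemma tri_map:
  assumes dd: "\<And>t. t \<in> T \<Longrightarrow> dd t t = 1" "\<And>t u. t \<in> T \<Longrightarrow> u \<in> T \<Longrightarrow> u \<noteq> t \<Longrightarrow> dd u t = 0"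
  shows "distinct ts \<Longrightarrow> set ts \<subseteq> T \<Longrightarrow> tri (map dd ts)"
proof (induction ts)
  case Nil thus ?case by simp
next
  case (Cons t ts)
  have "dd t t = 1" using Cons.prems dd by auto
  moreover have "\<forall>u\<in>set (map dd ts). u t = 0" using Cons.prems dd by auto
  ultimately show ?case using Cons by auto
qed

lemma main_bound:
  fixes h :: "nat \<Rightarrow> 'a::complex_hilbert"
  assumes fr: "frame h" and Y: "finite Y" "Y \<subseteq> l2"
    "\<forall>c\<in>Kset (analysis_op h). sq c \<le> 1 \<longrightarrow> (\<exists>y\<in>Y. sq (\<lambda>n. c n - y n) < 1/2)"
    and frS: "frame_on (UNIV - S) h"
  shows "finite S \<and> card S \<le> card Y"
proof (rule ccontr)
  assume neg: "\<not> (finite S \<and> card S \<le> card Y)"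
  obtain T where T: "T \<subseteq> S" "finite T" "card T = Suc (card Y)"
  proof (cases "finite S")
    case True
    hence "Suc (card Y) \<le> card S" using neg by simp
    thus ?thesis using that obtain_subset_with_card_n by metis
  next
    case False
    thus ?thesis using that infinite_arbitrarily_large by metis
  qed
  define K where "K = Kset (analysis_op h)"
  have KL: "K \<subseteq> l2" by (auto simp: K_def Kset_def)
  define dd where "dd t = (SOME d. d \<in> l2 \<and> (\<forall>x. l2inner (analysis_op h x) d = 0) \<and> d t = 1 \<and> (\<forall>u\<in>S. u \<noteq> t \<longrightarrow> d u = 0))" for t
  have dd: "dd t \<in> l2 \<and> (\<forall>x. l2inner (analysis_op h x) (dd t) = 0) \<and> dd t t = 1 \<and> (\<forall>u\<in>S. u \<noteq> t \<longrightarrow> dd t u = 0)"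
    if "t \<in> S" for t
  proof -
    have "\<exists>d. d \<in> l2 \<and> (\<forall>x. l2inner (analysis_op h x) d = 0) \<and> d t = 1 \<and> (\<forall>u\<in>S. u \<noteq> t \<longrightarrow> d u = 0)"
      using exists_d[OF fr frS that] by blast
    thus ?thesis unfolding dd_def by (rule someI_ex)
  qed
  define ts where "ts = sorted_list_of_set T"
  have ts: "distinct ts" "set ts = T" using T by (auto simp: ts_def)
  define vs where "vs = map dd ts"
  have dd1: "dd t t = 1" if "t \<in> T" for t using dd[of t] T(1) that by blast
  have dd2: "dd u t = 0" if "t \<in> T" "u \<in> T" "u \<noteq> t" for t u
  proof -
    have "u \<in> S" "t \<in> S" using that T(1) by auto
    thus ?thesis using dd[of u] that(3) by metis
  qed
  have tri: "tri vs" unfolding vs_def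
    by (rule tri_map[of T dd, OF dd1 dd2]) (use ts in auto)
  have vsK: "set vs \<subseteq> Kset (analysis_op h)" using dd T ts by (auto simp: vs_def Kset_def)
  have G: "set (gs vs) \<subseteq> Kset (analysis_op h) \<and> distinct (gs vs) \<and> length (gs vs) = length vs \<and> ONset (set (gs vs))"
    using gs_props[of "analysis_op h" vs, OF analysis_l2[OF fr] tri vsK] by blast
  have "card (set (gs vs)) \<le> card Y"
    using ortho_card[OF Y, of "set (gs vs)"] G KL unfolding K_def by blast
  moreover have "card (set (gs vs)) = card T"
    using G distinct_card[of "gs vs"] ts distinct_card[of ts] by (simp add: vs_def)
  ultimately show False using T by simp
qed

lemma adj_zero:
  assumes "c \<in> Kset (analysis_op f)"
  shows "analysis_adj f c = 0"
proof -
  have z: "\<forall>x. l2inner (analysis_op f x) c = 0" using assms by (simp add: Kset_def)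
  show ?thesis unfolding analysis_adj_def
  proof (rule the_equality)
    show "\<forall>x. cinner x 0 = l2inner (analysis_op f x) c" using z by (simp add: cinner_zero_right)
  next
    fix y assume "\<forall>x. cinner x y = l2inner (analysis_op f x) c"
    hence "cinner y y = 0" using z by simp
    thus "y = 0" by (simp add: cinner_eq_zero_iff)
  qed
qed

lemma Hg:
  assumes fg: "frame g" and c: "c \<in> Kset (analysis_op g)" and c': "c' \<in> Kset (analysis_op g)"
  shows "sq (\<lambda>n. c n - c' n) \<le> sq (\<lambda>n. (c n - analysis_op g y n) - (c' n - analysis_op g y' n))"
proof -
  have cl: "c \<in> l2" "c' \<in> l2" using c c' by (auto simp: Kset_def)
  have Vl: "analysis_op g y \<in> l2" "analysis_op g y' \<in> l2" using analysis_l2[OF fg] by auto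
  define b where "b = (\<lambda>n. c n - c' n)"
  define vv where "vv = (\<lambda>n. analysis_op g y n - analysis_op g y' n)"
  have bl: "b \<in> l2" unfolding b_def by (rule l2_diff[OF cl])
  have vl: "vv \<in> l2" unfolding vv_def by (rule l2_diff[OF Vl])
  have aeq: "(\<lambda>n. (c n - analysis_op g y n) - (c' n - analysis_op g y' n)) = (\<lambda>n. b n - vv n)"
    by (auto simp: fun_eq_iff b_def vv_def)
  define a where "a = (\<lambda>n. b n - vv n)"
  have al: "a \<in> l2" unfolding a_def by (rule l2_diff[OF bl vl])
  have "l2inner vv b = 0"
  proof -
    have "l2inner vv b = l2inner (analysis_op g y) b - l2inner (analysis_op g y') b"
      unfolding vv_def by (rule l2inner_diff_left[OF Vl bl])
    also have "l2inner (analysis_op g y) b = 0"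
      unfolding b_def using l2inner_diff_right[OF Vl(1) cl] c c' by (simp add: Kset_def)
    also have "l2inner (analysis_op g y') b = 0"
      unfolding b_def using l2inner_diff_right[OF Vl(2) cl] c c' by (simp add: Kset_def)
    finally show ?thesis by simp
  qed
  hence "l2inner a b = complex_of_real (sq b)"
    unfolding a_def using l2inner_diff_left[OF bl vl bl] l2inner_self[OF bl] by simp
  hence "sq b = Re (l2inner a b)" by simp
  also have "\<dots> \<le> cmod (l2inner a b)" by (rule complex_Re_le_cmod)
  also have "\<dots> \<le> (\<Sum>n. cmod (a n) * cmod (b n))" by (rule norm_l2inner[OF al bl])
  also have "\<dots> \<le> (sq a + sq b) / 2" by (rule amgm_sum[OF al bl])
  finally have "sq b \<le> sq a" by simp
  thus ?thesis unfolding aeq a_def b_def .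
qed



theorem corollary3p2:
  fixes f g :: "nat \<Rightarrow> 'h::complex_hilbert"
  assumes "separable_hilbert TYPE('h)"
    and "infinite_dimensional TYPE('h)"
    and "frame f" and "frame g"
    and "l2_compact (\<lambda>c. c - analysis_op g (analysis_adj f c))"
  shows "near_riesz f \<and> near_riesz g"
proof -
  define T where "T = (\<lambda>c. c - analysis_op g (analysis_adj f c))"
  have Tc: "l2_compact T" using assms(5) by (simp add: T_def)
  have Tapp: "T c n = c n - analysis_op g (analysis_adj f c) n" for c n by (simp add: T_def)
  have Kf: "Kset (analysis_op f) \<subseteq> l2" by (auto simp: Kset_def)
  have Kg: "Kset (analysis_op g) \<subseteq> l2" by (auto simp: Kset_def)
  have Hf: "sq (\<lambda>n. c n - c' n) \<le> sq (\<lambda>n. T c n - T c' n)"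
    if "c \<in> Kset (analysis_op f)" "c' \<in> Kset (analysis_op f)" for c c'
    using that by (simp add: Tapp adj_zero analysis_op_def cinner_zero_left)
  have Hg': "sq (\<lambda>n. c n - c' n) \<le> sq (\<lambda>n. T c n - T c' n)"
    if "c \<in> Kset (analysis_op g)" "c' \<in> Kset (analysis_op g)" for c c'
    unfolding Tapp by (rule Hg[OF assms(4) that])
  obtain Yf where Yf: "finite Yf" "Yf \<subseteq> l2"
      "\<forall>c\<in>Kset (analysis_op f). sq c \<le> 1 \<longrightarrow> (\<exists>y\<in>Yf. sq (\<lambda>n. c n - y n) < 1/2)"
    using net[OF Tc Kf Hf] by blast
  obtain Yg where Yg: "finite Yg" "Yg \<subseteq> l2"
      "\<forall>c\<in>Kset (analysis_op g). sq c \<le> 1 \<longrightarrow> (\<exists>y\<in>Yg. sq (\<lambda>n. c n - y n) < 1/2)"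
    using net[OF Tc Kg Hg'] by blast
  have "near_riesz f" unfolding near_riesz_def
    using assms(3) main_bound[OF assms(3) Yf] by blast
  moreover have "near_riesz g" unfolding near_riesz_def
    using assms(4) main_bound[OF assms(4) Yg] by blast
  ultimately show ?thesis ..
qed

end
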